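(* Let $k \ge 2$, $\rho \ge 1$ and $v$ be integers (for which $\beta(\rho,v,k)$ is defined). Then \[ \beta(\rho,v,k) \le \rho\left( \frac{k^2(\rho-1)}{2} + 1 + \max\left\{ k(k-1), \left\lfloor \frac{v-k\rho}{k-1} \right\rfloor \right\} \right). \]
   Context: For integers $v \ge k \ge 2$, a $(v,k)$-packing is a pair $(X,\mathcal{B})$ where $X$ is a set of $v$ points and $\mathcal{B}$ is a set of $k$-subsets of $X$ (blocks) such that every pair of distinct points lies in at most one block. A partial parallel class (PPC) is a set of pairwise disjoint blocks; its size is the number of blocks. A PPC of size $\rho$ is maximum if the packing has no PPC of size $\rho+1$. $\beta(\rho,v,k)$ denotes the maximum number of blocks in a $(v,k)$-packing in which the maximum PPC has size $\rho$. *)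

theory Defs
  imports Complex_Main "HOL-Library.Disjoint_Sets"
begin

definition packing :: "'a set \<Rightarrow> 'a set set \<Rightarrow> nat \<Rightarrow> bool" where
  "packing X B k \<longleftrightarrow> finite X \<and> (\<forall>b\<in>B. b \<subseteq> X \<and> card b = k) \<and>
     (\<forall>x\<in>X. \<forall>y\<in>X. x \<noteq> y \<longrightarrow> card {b\<in>B. x \<in> b \<and> y \<in> b} \<le> 1)"

definition ppc :: "'a set set \<Rightarrow> 'a set set \<Rightarrow> bool" where
  "ppc B P \<longleftrightarrow> P \<subseteq> B \<and> disjoint P"

definition max_ppc_size :: "'a set set \<Rightarrow> nat \<Rightarrow> bool" where
  "max_ppc_size B rho \<longleftrightarrow> (\<exists>P. ppc B P \<and> card P = rho) \<and> \<not> (\<exists>P. ppc B P \<and> card P = rho + 1)"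

text \<open>beta(rho,v,k): maximum number of blocks of a (v,k)-packing whose maximum PPC has
size rho (point sets taken, without loss of generality, as sets of naturals).\<close>
definition beta_packings :: "nat \<Rightarrow> nat \<Rightarrow> nat \<Rightarrow> nat set" where
  "beta_packings rho v k = {card B | X B. card X = v \<and> packing (X :: nat set) B k \<and> max_ppc_size B rho}"

definition beta :: "nat \<Rightarrow> nat \<Rightarrow> nat \<Rightarrow> nat" where
  "beta rho v k = Max (beta_packings rho v k)"

end

theory Submission
  imports Defs
begin

locale pk =
  fixes X :: "'a set" and B :: "'a set set" and k :: nat and P :: "'a set set" and rho :: nat
  assumes finX: "finite X"
    and blocks: "\<And>b. b \<in> B \<Longrightarrow> b \<subseteq> X \<and> card b = k"
    and pairs: "\<And>x y. x \<in> X \<Longrightarrow> y \<in> X \<Longrightarrow> x \<noteq> y \<Longrightarrow> card {b\<in>B. x \<in> b \<and> y \<in> b} \<le> 1"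
    and k2: "k \<ge> 2"
    and PB: "P \<subseteq> B" and Pdisj: "disjoint P" and cardP: "card P = rho"
    and nomore: "\<And>Q. Q \<subseteq> B \<Longrightarrow> disjoint Q \<Longrightarrow> card Q \<noteq> rho + 1"
begin

definition "U = \<Union>P"

lemma cardb: "b \<in> B \<Longrightarrow> card b = k"
  using blocks[of b] by blast

lemma subX: "b \<in> B \<Longrightarrow> b \<subseteq> X"
  using blocks[of b] by blast

lemma finB: "finite B"
proof -
  have "B \<subseteq> Pow X" using subX by blast
  moreover have "finite (Pow X)" using finX by simp
  ultimately show ?thesis by (rule finite_subset)
qed

lemma finb: assumes "b \<in> B" shows "finite b"
proof -
  have "card b = k" using cardb[OF assms] .
  hence "0 < card b" using k2 by linarith
  thus ?thesis by (rule card_ge_0_finite)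
qed

lemma nonempty: assumes "b \<in> B" shows "b \<noteq> {}"
proof
  assume "b = {}"
  hence "card b = 0" by simp
  thus False using cardb[OF assms] k2 by linarith
qed

lemma linear:
  assumes "b1 \<in> B" "b2 \<in> B" "x \<in> b1" "y \<in> b1" "x \<in> b2" "y \<in> b2" "x \<noteq> y"
  shows "b1 = b2"
proof -
  let ?S = "{b\<in>B. x \<in> b \<and> y \<in> b}"
  have fin: "finite ?S" using finB by simp
  have xX: "x \<in> X" using subX[OF assms(1)] assms(3) by blast
  have yX: "y \<in> X" using subX[OF assms(1)] assms(4) by blast
  have c: "card ?S \<le> Suc 0" using pairs[OF xX yX assms(7)] by simp
  have all: "\<forall>a1\<in>?S. \<forall>a2\<in>?S. a1 = a2" using c card_le_Suc0_iff_eq[OF fin] by simp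
  have "b1 \<in> ?S" "b2 \<in> ?S" using assms by auto
  thus ?thesis using all by blast
qed

lemma finP: "finite P" using finB PB finite_subset by blast

lemma Pdisj': "b1 \<in> P \<Longrightarrow> b2 \<in> P \<Longrightarrow> b1 \<noteq> b2 \<Longrightarrow> b1 \<inter> b2 = {}"
  using Pdisj unfolding pairwise_def disjnt_def by blast

lemma cardU: "card U = k * rho"
proof -
  have "card U = sum card P" unfolding U_def
    using card_Union_disjoint[OF Pdisj] finb PB by blast
  also have "\<dots> = sum (\<lambda>_. k) P" using cardb PB by (intro sum.cong) auto
  finally show ?thesis using cardP by simp
qed

lemma UX: "U \<subseteq> X" unfolding U_def using PB subX by blast

lemma finU: "finite U" using UX finX finite_subset by blast

lemma meetU: assumes "C \<in> B" shows "C \<inter> U \<noteq> {}"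
proof
  assume e: "C \<inter> U = {}"
  have nP: "C \<notin> P" using e nonempty[OF assms] unfolding U_def by blast
  have "disjoint (insert C P)"
    unfolding pairwise_insert using Pdisj e unfolding U_def disjnt_def by blast
  moreover have "card (insert C P) = rho + 1" using nP finP cardP by simp
  moreover have "insert C P \<subseteq> B" using PB assms by blast
  ultimately show False using nomore by blast
qed

lemma priv_inter:
  assumes Bi: "Bi \<in> P" and C: "C \<in> B" and C': "C' \<in> B"
    and pC: "C \<inter> U \<subseteq> Bi" and pC': "C' \<inter> U \<subseteq> Bi"
  shows "C \<inter> C' \<noteq> {}"
proof
  assume e: "C \<inter> C' = {}"
  have dC: "\<forall>Bj\<in>P-{Bi}. C \<inter> Bj = {}" using pC Pdisj'[OF Bi] unfolding U_def by blast
  have dC': "\<forall>Bj\<in>P-{Bi}. C' \<inter> Bj = {}" using pC' Pdisj'[OF Bi] unfolding U_def by blast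
  have ne: "C \<noteq> C'" using e nonempty[OF C] by blast
  have nC: "C \<notin> P - {Bi}" using dC nonempty[OF C] by blast
  have nC': "C' \<notin> P - {Bi}" using dC' nonempty[OF C'] by blast
  let ?Q = "insert C (insert C' (P - {Bi}))"
  have "card ?Q = card (P - {Bi}) + 2" using ne nC nC' finP by simp
  also have "card (P - {Bi}) = rho - 1" using Bi finP cardP by simp
  finally have cq0: "card ?Q = rho - 1 + 2" .
  have "rho > 0" using Bi finP cardP by (auto simp: card_gt_0_iff)
  hence cq: "card ?Q = rho + 1" using cq0 by simp
  have dP: "disjoint (P - {Bi})" using pairwise_subset[OF Pdisj, of "P - {Bi}"] by blast
  have "disjoint ?Q"
    apply (simp only: pairwise_insert)
    using dC dC' e dP by (auto simp: disjnt_def)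
  moreover have "?Q \<subseteq> B" using PB C C' by blast
  ultimately show False using nomore cq by blast
qed

definition "priv Bi = {C\<in>B. C \<inter> U \<subseteq> Bi}"

lemma priv_F_bound:
  assumes Bi: "Bi \<in> P"
  shows "card (priv Bi - {Bi}) \<le> max (k*(k-1)) ((card X - k*rho) div (k-1))"
proof -
  define F where "F = priv Bi - {Bi}"
  have BiB: "Bi \<in> B" using Bi PB by blast
  have FB: "F \<subseteq> B" unfolding F_def priv_def by blast
  have finF: "finite F" using FB finB finite_subset by blast
  have meet: "C \<inter> Bi \<noteq> {}" if "C \<in> F" for C
    using meetU[of C] that FB unfolding F_def priv_def by blast
  have inter: "C \<inter> D \<noteq> {}" if "C \<in> F" "D \<in> F" for C D
    using priv_inter[OF Bi, of C D] that unfolding F_def priv_def by blast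
  have notBi: "C \<noteq> Bi" if "C \<in> F" for C using that unfolding F_def by blast
  show ?thesis
  proof (cases "\<exists>a\<in>Bi. \<forall>C\<in>F. a \<in> C")
    case True
    then obtain a where a: "a \<in> Bi" "\<forall>C\<in>F. a \<in> C" by blast
    have sub: "(\<Union>C\<in>F. C - {a}) \<subseteq> X - U"
    proof
      fix y assume "y \<in> (\<Union>C\<in>F. C - {a})"
      then obtain C where C: "C \<in> F" "y \<in> C" "y \<noteq> a" by blast
      have "y \<in> X" using C FB subX by blast
      moreover have "y \<notin> U"
      proof
        assume "y \<in> U"
        hence "y \<in> Bi" using C unfolding F_def priv_def by blast
        hence "C = Bi" using linear[OF _ BiB, of C a y] C a FB by blast
        thus False using notBi C by blast
      qed
      ultimately show "y \<in> X - U" by blast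
    qed
    have "card (\<Union>C\<in>F. C - {a}) = (\<Sum>C\<in>F. card (C - {a}))"
    proof (rule card_UN_disjoint[OF finF])
      show "\<forall>i\<in>F. finite (i - {a})" using FB finb by blast
      show "\<forall>i\<in>F. \<forall>j\<in>F. i \<noteq> j \<longrightarrow> (i - {a}) \<inter> (j - {a}) = {}"
        using linear a FB by blast
    qed
    also have "\<dots> = (\<Sum>C\<in>F. k - 1)"
      using a FB cardb finb by (intro sum.cong) auto
    finally have "card F * (k - 1) \<le> card (X - U)"
      using card_mono[OF _ sub] finX by (simp add: mult.commute)
    also have "card (X - U) = card X - k * rho"
      using card_Diff_subset[OF finU UX] cardU by simp
    finally have "card F * (k-1) \<le> card X - k * rho" .
    hence "card F \<le> (card X - k * rho) div (k-1)"
      using k2 by (simp add: less_eq_div_iff_mult_less_eq)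
    thus ?thesis unfolding F_def by simp
  next
    case False
    hence D: "\<forall>a\<in>Bi. \<exists>D\<in>F. a \<notin> D" by blast
    have Fcov: "F = (\<Union>a\<in>Bi. {C\<in>F. a \<in> C})" using meet by blast
    have each: "card {C\<in>F. a \<in> C} \<le> k - 1" if a: "a \<in> Bi" for a
    proof -
      obtain D where Dd: "D \<in> F" "a \<notin> D" using D a by blast
      define g where "g C = (SOME z. z \<in> C \<inter> D)" for C
      have g: "g C \<in> C \<inter> D" if "C \<in> F" for C
        unfolding g_def using inter[OF that Dd(1)] by (metis ex_in_conv someI_ex)
      have inj: "inj_on g {C\<in>F. a \<in> C}"
      proof (rule inj_onI)
        fix C C' assume C: "C \<in> {C\<in>F. a \<in> C}" and C': "C' \<in> {C\<in>F. a \<in> C}" and e: "g C = g C'"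
        have "g C \<noteq> a" using g[of C] C Dd by auto
        thus "C = C'" using linear[of C C' a "g C"] g[of C] g[of C'] C C' e FB by auto
      qed
      have img: "g ` {C\<in>F. a \<in> C} \<subseteq> D - Bi"
      proof
        fix z assume "z \<in> g ` {C\<in>F. a \<in> C}"
        then obtain C where C: "C \<in> F" "a \<in> C" "z = g C" by blast
        have "z \<noteq> a" using g[of C] C Dd by auto
        moreover have "z \<in> C" "z \<in> D" using g[OF C(1)] C by auto
        ultimately have "z \<notin> Bi" using linear[OF _ BiB, of C a z] C a FB notBi by blast
        thus "z \<in> D - Bi" using \<open>z \<in> D\<close> by blast
      qed
      have DB: "D \<in> B" using Dd FB by blast
      have "card (D - Bi) < card D"
        using meet[OF Dd(1)] finb[OF DB] by (intro psubset_card_mono) auto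
      hence "card (D - Bi) \<le> k - 1" using cardb[OF DB] by simp
      moreover have "card {C\<in>F. a \<in> C} \<le> card (D - Bi)"
        using card_inj_on_le[OF inj img] finb[OF DB] by simp
      ultimately show ?thesis by simp
    qed
    have "card F \<le> (\<Sum>a\<in>Bi. card {C\<in>F. a \<in> C})"
      using card_UN_le[of Bi "\<lambda>a. {C\<in>F. a \<in> C}"] finb[OF BiB] Fcov by simp
    also have "\<dots> \<le> (\<Sum>a\<in>Bi. k - 1)" using each by (intro sum_mono) auto
    also have "\<dots> = k * (k - 1)" using cardb[OF BiB] by simp
    finally show ?thesis unfolding F_def by simp
  qed
qed

lemma priv_bound:
  assumes Bi: "Bi \<in> P"
  shows "card (priv Bi) \<le> 1 + max (k*(k-1)) ((card X - k*rho) div (k-1))"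
proof -
  have fin: "finite (priv Bi)" using finB unfolding priv_def by simp
  have "card (priv Bi) \<le> 1 + card (priv Bi - {Bi})"
  proof (cases "Bi \<in> priv Bi")
    case True
    show ?thesis using card_Suc_Diff1[OF fin True] by linarith
  next
    case False
    hence "priv Bi - {Bi} = priv Bi" by blast
    thus ?thesis by simp
  qed
  thus ?thesis using priv_F_bound[OF Bi] by linarith
qed


definition "S = U \<times> U - (\<Union>b\<in>P. b \<times> b)"

lemma cardS: "card S = k*rho*(k*rho) - rho*(k*k)"
proof -
  have sub: "(\<Union>b\<in>P. b \<times> b) \<subseteq> U \<times> U" unfolding U_def by blast
  have "card (\<Union>b\<in>P. b \<times> b) = (\<Sum>b\<in>P. card (b \<times> b))"
  proof (rule card_UN_disjoint[OF finP])
    show "\<forall>i\<in>P. finite (i \<times> i)" using finb PB by blast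
    show "\<forall>i\<in>P. \<forall>j\<in>P. i \<noteq> j \<longrightarrow> i \<times> i \<inter> j \<times> j = {}" using Pdisj' by blast
  qed
  also have "\<dots> = (\<Sum>b\<in>P. k * k)" using cardb PB by (intro sum.cong) (auto simp: card_cartesian_product)
  finally have c1: "card (\<Union>b\<in>P. b \<times> b) = rho * (k * k)" using cardP by simp
  have "card S = card (U \<times> U) - card (\<Union>b\<in>P. b \<times> b)"
    unfolding S_def using finU by (intro card_Diff_subset[OF _ sub]) (simp add: finite_subset[OF sub])
  thus ?thesis using c1 cardU by (simp add: card_cartesian_product)
qed

definition "N = B - (\<Union>Bi\<in>P. priv Bi)"

lemma nonpriv: "2 * card N \<le> card S"
proof -
  define T where "T C = C \<times> C \<inter> S" for C
  have finN: "finite N" unfolding N_def using finB by simp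
  have NB: "N \<subseteq> B" unfolding N_def by blast
  have two: "2 \<le> card (T C)" if C: "C \<in> N" for C
  proof -
    have CB: "C \<in> B" using C NB by blast
    obtain x where x: "x \<in> C" "x \<in> U" using meetU[OF CB] by blast
    then obtain Bi where Bi: "Bi \<in> P" "x \<in> Bi" unfolding U_def by blast
    have "C \<notin> priv Bi" using C Bi unfolding N_def by blast
    then obtain y where y: "y \<in> C" "y \<in> U" "y \<notin> Bi" using CB unfolding priv_def by blast
    have xy: "x \<noteq> y" using Bi y by blast
    have nb: "\<not> (\<exists>b\<in>P. x \<in> b \<and> y \<in> b)"
      using Pdisj'[OF Bi(1)] Bi y by blast
    have "{(x,y),(y,x)} \<subseteq> T C" unfolding T_def S_def using x y nb by blast
    moreover have "finite (T C)" unfolding T_def using finb[OF CB] by simp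
    ultimately have "card {(x,y),(y,x)} \<le> card (T C)" by (rule card_mono[rotated])
    thus ?thesis using xy by simp
  qed
  have "card (\<Union>C\<in>N. T C) = (\<Sum>C\<in>N. card (T C))"
  proof (rule card_UN_disjoint[OF finN])
    show "\<forall>i\<in>N. finite (T i)" unfolding T_def using finb NB by blast
    show "\<forall>i\<in>N. \<forall>j\<in>N. i \<noteq> j \<longrightarrow> T i \<inter> T j = {}"
    proof (intro ballI impI)
      fix i j assume ij: "i \<in> N" "j \<in> N" "i \<noteq> j"
      show "T i \<inter> T j = {}"
      proof (rule ccontr)
        assume "T i \<inter> T j \<noteq> {}"
        then obtain x y where xy: "(x,y) \<in> T i" "(x,y) \<in> T j" by auto
        have "x \<noteq> y" using xy unfolding T_def S_def U_def by blast
        thus False using linear[of i j x y] xy ij NB unfolding T_def by blast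
      qed
    qed
  qed
  moreover have "(\<Sum>C\<in>N. 2) \<le> (\<Sum>C\<in>N. card (T C))" using two by (intro sum_mono) auto
  moreover have "card (\<Union>C\<in>N. T C) \<le> card S"
    using finU unfolding T_def S_def by (intro card_mono) auto
  ultimately show ?thesis by (simp add: mult.commute)
qed

lemma cardB: "card B \<le> rho * (1 + max (k*(k-1)) ((card X - k*rho) div (k-1))) + card N"
proof -
  have "B = (\<Union>Bi\<in>P. priv Bi) \<union> N" unfolding N_def priv_def by blast
  hence "card B \<le> card (\<Union>Bi\<in>P. priv Bi) + card N" by (metis card_Un_le)
  also have "card (\<Union>Bi\<in>P. priv Bi) \<le> (\<Sum>Bi\<in>P. card (priv Bi))" by (rule card_UN_le[OF finP])
  also have "\<dots> \<le> (\<Sum>Bi\<in>P. 1 + max (k*(k-1)) ((card X - k*rho) div (k-1)))"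
    using priv_bound by (intro sum_mono) auto
  finally show ?thesis using cardP by simp
qed

lemma final_nat: "2 * card B \<le> 2 * rho * (1 + max (k*(k-1)) ((card X - k*rho) div (k-1))) + k*k*rho*(rho-1)"
proof -
  have "k*rho*(k*rho) - rho*(k*k) = (k*k*rho)*rho - (k*k*rho)*1" by (simp add: algebra_simps)
  also have "\<dots> = k*k*rho*(rho-1)" by (simp add: diff_mult_distrib2)
  finally show ?thesis using cardB nonpriv cardS by linarith
qed

lemma krho: "k * rho \<le> card X"
  using cardU card_mono[OF finX UX] by simp

end

theorem theorem5p4:
  fixes rho v k :: nat
  assumes k2: "k \<ge> 2" and r1: "rho \<ge> 1"
    and ne: "beta_packings rho v k \<noteq> {}"
  shows "real (beta rho v k) \<le> real rho * (real (k^2) * (real rho - 1) / 2 + 1 +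
           max (real (k * (k - 1)))
               (real_of_int (floor ((real v - real k * real rho) / (real k - 1)))))"
    (is "_ \<le> ?Bd")
proof -
  have all: "real n \<le> ?Bd" if n: "n \<in> beta_packings rho v k" for n
  proof -
    obtain X :: "nat set" and B where XB: "n = card B" "card X = v" "packing X B k" "max_ppc_size B rho"
      using n unfolding beta_packings_def by blast
    obtain P where P: "ppc B P" "card P = rho" using XB(4) unfolding max_ppc_size_def by blast
    interpret pk X B k P rho
    proof
      show "finite X" using XB(3) unfolding packing_def by blast
      show "\<And>b. b \<in> B \<Longrightarrow> b \<subseteq> X \<and> card b = k" using XB(3) unfolding packing_def by blast
      show "\<And>x y. x \<in> X \<Longrightarrow> y \<in> X \<Longrightarrow> x \<noteq> y \<Longrightarrow> card {b\<in>B. x \<in> b \<and> y \<in> b} \<le> 1"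
        using XB(3) unfolding packing_def by blast
      show "k \<ge> 2" by (rule k2)
      show "P \<subseteq> B" "disjoint P" using P(1) unfolding ppc_def by auto
      show "card P = rho" by (rule P(2))
      show "\<And>Q. Q \<subseteq> B \<Longrightarrow> disjoint Q \<Longrightarrow> card Q \<noteq> rho + 1"
        using XB(4) unfolding max_ppc_size_def ppc_def by blast
    qed
    define M where "M = max (k*(k-1)) ((v - k*rho) div (k-1))"
    have fn: "2 * n \<le> 2 * rho * (1 + M) + k*k*rho*(rho-1)"
      using final_nat XB(1,2) unfolding M_def by simp
    have kr: "k * rho \<le> v" using krho XB(2) by simp
    have e1: "real v - real k * real rho = real (v - k*rho)" using kr by (simp add: of_nat_diff)
    have e2: "real k - 1 = real (k - 1)" using k2 by (simp add: of_nat_diff)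
    have fl: "real_of_int (floor ((real v - real k * real rho) / (real k - 1))) = real ((v - k*rho) div (k-1))"
      unfolding e1 e2 floor_divide_of_nat_eq by simp
    have mx: "max (real (k * (k - 1))) (real ((v - k*rho) div (k-1))) = real M"
      unfolding M_def by (rule of_nat_max[symmetric])
    have fr: "2 * real n \<le> 2 * real rho + 2 * real rho * real M + real k * real k * real rho * (real rho - 1)"
    proof -
      have "real (2 * n) \<le> real (2 * rho * (1 + M) + k*k*rho*(rho-1))" using fn by linarith
      thus ?thesis using r1 by (simp add: of_nat_diff)
    qed
    have "?Bd = real rho + real rho * real M + real k * real k * real rho * (real rho - 1) / 2"
      unfolding fl mx by (simp add: algebra_simps power2_eq_square)
    thus ?thesis using fr by linarith
  qed
  define m where "m = nat (ceiling ?Bd)"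
  have sub: "beta_packings rho v k \<subseteq> {..m}"
  proof
    fix n assume "n \<in> beta_packings rho v k"
    hence "real n \<le> ?Bd" by (rule all)
    hence "real n \<le> real m" unfolding m_def by linarith
    thus "n \<in> {..m}" by simp
  qed
  have "finite (beta_packings rho v k)" using sub finite_subset by blast
  hence "beta rho v k \<in> beta_packings rho v k" unfolding beta_def using ne by (rule Max_in)
  thus ?thesis by (rule all)
qed

end
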